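(* Let $n>m\ge3$, and let $\mathbb{K}$, its $W_{m,n}$-action and the field $\mathcal{L}=\mathbb{K}(f_1,\dots,f_m;\tau_1,\dots,\tau_n)$ be as in the context. Define automorphisms $s_0,\dots,s_{n-1}$ of $\mathcal{L}$ extending the given action on $\mathbb{K}$ by: $s_0(\tau_j)=\tau_jf_j$ ($1\le j\le m$), $s_0(\tau_j)=\tau_j$ ($m+1\le j\le n$), $s_k(\tau_j)=\tau_{s_k(j)}$ ($1\le k\le n-1$, $1\le j\le n$), where $s_k(j)$ is the image of $j$ under the transposition $(k,k+1)$; $s_0(f_i)=1/f_i$; $s_k(f_i)=f_{s_k(i)}$ for $1\le k\le m-1$; $s_k(f_i)=f_i$ for $m+1\le k\le n-1$; $$s_m(f_i)=\frac{\tau_m}{\tau_{m+1}}\cdot\frac{[\alpha_0+\varepsilon_{m,m+1}][\varepsilon_{i,m+1}]f_i-[\alpha_0+\varepsilon_{i,m+1}][\varepsilon_{m,m+1}]f_m}{[\alpha_0][\varepsilon_{i,m}]}\quad(1\le i\le m-1),\qquad s_m(f_m)=\frac{\tau_m}{\tau_{m+1}}f_m.$$ Then $s_0,\dots,s_{n-1}$ satisfy the fundamental relations of the simple reflections of $W_{m,n}$: $s_i^2=1$; $s_is_j=s_js_i$ if nodes $i,j$ are not joined; $s_is_js_i=s_js_is_j$ if nodes $i,j$ are joined in the tree $T_{2,m,n-m}$.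
   Context: $[x]$ is a fixed nonzero odd holomorphic function on $\mathbb{C}$ satisfying the Riemann relation $[x+y][x-y][u+v][u-v]=[x+u][x-u][y+v][y-v]-[x+v][x-v][y+u][y-u]$ for all $x,y,u,v\in\mathbb{C}$. $\mathfrak{h}=\bigoplus_{j=0}^n\mathbb{C}e_j$ with symmetric form $\langle e_0,e_0\rangle=-(m-2)$, $\langle e_j,e_j\rangle=1$ ($1\le j\le n$), $\langle e_i,e_j\rangle=0$ ($i\ne j$); $\varepsilon_j=\langle e_j,\cdot\rangle\in\mathfrak{h}^*$, $\varepsilon_{i,j}=\varepsilon_i-\varepsilon_j$. Simple coroots $h_0=e_0-e_1-\dots-e_m$, $h_k=e_k-e_{k+1}$ ($1\le k\le n-1$); simple roots $\alpha_k=\langle h_k,\cdot\rangle$, so $\alpha_0=\varepsilon_0-\varepsilon_1-\dots-\varepsilon_m$. The tree $T_{2,m,n-m}$ has nodes $0,\dots,n-1$, with $1-2-\dots-(n-1)$ a chain and node $0$ joined to node $m$. $W_{m,n}$ is the Coxeter group on $s_0,\dots,s_{n-1}$ for this tree; it acts on $\mathfrak{h}^*$ by $s_k.\lambda=\lambda-\langle h_k,\lambda\rangle\alpha_k$. Real roots: $\Delta=W_{m,n}\{\alpha_0,\dots,\alpha_{n-1}\}$. For $\alpha\in\mathfrak{h}^*$, $[\alpha]$ denotes the function $h\mapsto[\alpha(h)]$ on $\mathfrak{h}$. $\mathbb{K}$ is the field of meromorphic functions on $\mathfrak{h}$ generated over $\mathbb{C}$ by $[\alpha]$, $\alpha\in\Delta$;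 $W_{m,n}$ acts on $\mathbb{K}$ by field automorphisms with $w([\alpha])=[w.\alpha]$. $\mathcal{L}$ is the field of rational functions in indeterminates $f_1,\dots,f_m,\tau_1,\dots,\tau_n$ over $\mathbb{K}$. *)

theory Defs
  imports "HOL-Analysis.Analysis"
begin

text \<open>
  A point of h is a coordinate vector h = sum_{j=0..n} h_j e_j, stored as
  nat => complex (coordinates j > n are unused).  An element of the field
  L = K(f_1..f_m, tau_1..tau_n) is a meromorphic function of (h, f, tau).  The automorphism
  s_k of L (extending g |-> g o s_k on K and given on generators by rational expressions R)
  acts by pull-back along the rational map Phi_k (h,f,tau) = (s_k h, R(h,f,tau)); hence a
  word relation among the s_k holds in L iff the corresponding composite of the maps Phi_k
  agrees (wherever it is defined) with the composite on the other side.
\<close>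

type_synonym point = "(nat \<Rightarrow> complex) \<times> (nat \<Rightarrow> complex) \<times> (nat \<Rightarrow> complex)"

definition form :: "nat \<Rightarrow> nat \<Rightarrow> (nat \<Rightarrow> complex) \<Rightarrow> (nat \<Rightarrow> complex) \<Rightarrow> complex" where
  "form m n v w = - (of_nat m - 2) * v 0 * w 0 + (\<Sum>j\<in>{1..n}. v j * w j)"

definition basis_e :: "nat \<Rightarrow> nat \<Rightarrow> complex" where
  "basis_e i = (\<lambda>j. if j = i then 1 else 0)"

definition eps :: "nat \<Rightarrow> nat \<Rightarrow> nat \<Rightarrow> (nat \<Rightarrow> complex) \<Rightarrow> complex" where
  "eps m n j h = form m n (basis_e j) h"

definition eps2 :: "nat \<Rightarrow> nat \<Rightarrow> nat \<Rightarrow> nat \<Rightarrow> (nat \<Rightarrow> complex) \<Rightarrow> complex" where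
  "eps2 m n i j h = eps m n i h - eps m n j h"

definition coroot :: "nat \<Rightarrow> nat \<Rightarrow> nat \<Rightarrow> complex" where
  "coroot m k = (if k = 0 then (\<lambda>j. if j = 0 then 1 else if 1 \<le> j \<and> j \<le> m then -1 else 0)
                 else (\<lambda>j. if j = k then 1 else if j = k + 1 then -1 else 0))"

definition sroot :: "nat \<Rightarrow> nat \<Rightarrow> nat \<Rightarrow> (nat \<Rightarrow> complex) \<Rightarrow> complex" where
  "sroot m n k h = form m n (coroot m k) h"

text \<open>The (orthogonal, involutive) reflection s_k on h; [alpha](s_k h) = [s_k.alpha](h).\<close>
definition refl_h :: "nat \<Rightarrow> nat \<Rightarrow> nat \<Rightarrow> (nat \<Rightarrow> complex) \<Rightarrow> (nat \<Rightarrow> complex)" where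
  "refl_h m n k h = (\<lambda>j. h j - sroot m n k h * coroot m k j)"

definition sw :: "nat \<Rightarrow> nat \<Rightarrow> nat" where
  "sw k j = (if j = k then k + 1 else if j = k + 1 then k else j)"

definition fm :: "(complex \<Rightarrow> complex) \<Rightarrow> nat \<Rightarrow> nat \<Rightarrow> point \<Rightarrow> nat \<Rightarrow> complex" where
  "fm br m n p i = (case p of (h, f, \<tau>) \<Rightarrow>
     if 1 \<le> i \<and> i < m then
       \<tau> m / \<tau> (m + 1) *
       ((br (sroot m n 0 h + eps2 m n m (m + 1) h) * br (eps2 m n i (m + 1) h) * f i
         - br (sroot m n 0 h + eps2 m n i (m + 1) h) * br (eps2 m n m (m + 1) h) * f m)
        / (br (sroot m n 0 h) * br (eps2 m n i m h)))
     else if i = m then \<tau> m / \<tau> (m + 1) * f m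
     else f i)"

text \<open>The rational map Phi_k dual to s_k; None where a denominator vanishes.\<close>
definition Phi :: "(complex \<Rightarrow> complex) \<Rightarrow> nat \<Rightarrow> nat \<Rightarrow> nat \<Rightarrow> point \<Rightarrow> point option" where
  "Phi br m n k p = (case p of (h, f, \<tau>) \<Rightarrow>
     if k = 0 then
       (if (\<forall>i\<in>{1..m}. f i \<noteq> 0) then
          Some (refl_h m n 0 h,
                (\<lambda>i. if i \<in> {1..m} then 1 / f i else f i),
                (\<lambda>j. if j \<in> {1..m} then \<tau> j * f j else \<tau> j))
        else None)
     else if k = m then
       (if \<tau> (m + 1) \<noteq> 0 \<and> br (sroot m n 0 h) \<noteq> 0 \<and> (\<forall>i\<in>{1..<m}. br (eps2 m n i m h) \<noteq> 0) then
          Some (refl_h m n m h, fm br m n p, \<tau> \<circ> sw m)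
        else None)
     else Some (refl_h m n k h, (if k < m then f \<circ> sw k else f), \<tau> \<circ> sw k))"

text \<open>Composite map for a word [k1,...,kr]: apply Phi_k1 first, then Phi_k2, ...
  (corresponding to the automorphism s_k1 s_k2 ... s_kr of L).\<close>
fun actW :: "(nat \<Rightarrow> point \<Rightarrow> point option) \<Rightarrow> nat list \<Rightarrow> point \<Rightarrow> point option" where
  "actW \<Phi> [] p = Some p"
| "actW \<Phi> (k # ks) p = Option.bind (\<Phi> k p) (actW \<Phi> ks)"

definition joined :: "nat \<Rightarrow> nat \<Rightarrow> nat \<Rightarrow> nat \<Rightarrow> bool" where
  "joined m n i j \<longleftrightarrow> i < n \<and> j < n \<and>
     ((1 \<le> i \<and> j = i + 1) \<or> (1 \<le> j \<and> i = j + 1) \<or> (i = 0 \<and> j = m) \<or> (i = m \<and> j = 0))"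

definition rel_holds :: "(nat \<Rightarrow> point \<Rightarrow> point option) \<Rightarrow> nat list \<Rightarrow> nat list \<Rightarrow> bool" where
  "rel_holds \<Phi> w1 w2 \<longleftrightarrow> (\<forall>p q r. actW \<Phi> w1 p = Some q \<longrightarrow> actW \<Phi> w2 p = Some r \<longrightarrow> q = r)"

end

theory Submission
  imports Defs
begin

lemma eps_val: "1 \<le> j \<Longrightarrow> j \<le> n \<Longrightarrow> eps m n j h = h j"
proof -
  assume a: "1 \<le> j" "j \<le> n"
  have "(\<Sum>i\<in>{1..n}. basis_e j i * h i) = (\<Sum>i\<in>{1..n}. if i = j then h i else 0)"
    by (rule sum.cong) (auto simp: basis_e_def)
  also have "\<dots> = h j" using a by simp
  finally show ?thesis using a unfolding eps_def form_def by (simp add: basis_e_def)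
qed

lemma form_lin: "form m n v (\<lambda>j. h j - c * w j) = form m n v h - c * form m n v w"
  unfolding form_def by (simp add: algebra_simps sum_subtractf sum_distrib_left)

lemma form_sym: "form m n v w = form m n w v"
  unfolding form_def by (simp add: mult.commute)

lemma form_corootk: "1 \<le> k \<Longrightarrow> k < n \<Longrightarrow> form m n (coroot m k) w = w k - w (k+1)"
proof -
  assume k: "1 \<le> k" "k < n"
  have "(\<Sum>j\<in>{1..n}. coroot m k j * w j) = (\<Sum>j\<in>{1..n}. (if j = k then w j else 0)) - (\<Sum>j\<in>{1..n}. (if j = k+1 then w j else 0))"
    unfolding sum_subtractf[symmetric] using k by (intro sum.cong) (auto simp: coroot_def)
  also have "\<dots> = w k - w (k+1)" using k by simp
  finally show ?thesis using k unfolding form_def by (simp add: coroot_def)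
qed

lemma form_c0c0: "m \<le> n \<Longrightarrow> form m n (coroot m 0) (coroot m 0) = 2"
proof -
  assume mn: "m \<le> n"
  have "(\<Sum>j\<in>{1..n}. coroot m 0 j * coroot m 0 j) = (\<Sum>j\<in>{1..n}. if j \<le> m then 1 else 0)"
    by (rule sum.cong) (auto simp: coroot_def)
  also have "\<dots> = (\<Sum>j\<in>{1..m}. 1)"
    using mn by (intro sum.mono_neutral_cong_right) auto
  also have "\<dots> = of_nat m" by simp
  finally show ?thesis unfolding form_def by (simp add: coroot_def)
qed

lemma form_ckcl: "1 \<le> k \<Longrightarrow> k < n \<Longrightarrow> form m n (coroot m k) (coroot m l) = coroot m l k - coroot m l (k+1)"
  by (rule form_corootk)

lemma form_c0ck: "1 \<le> k \<Longrightarrow> k < n \<Longrightarrow> form m n (coroot m 0) (coroot m k) = (if k = m then -1 else 0)"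
  by (subst form_sym) (simp add: form_corootk, auto simp: coroot_def)

definition RR :: "nat \<Rightarrow> nat \<Rightarrow> (nat \<Rightarrow> complex) \<Rightarrow> (nat \<Rightarrow> complex) \<Rightarrow> (nat \<Rightarrow> complex)" where
  "RR m n w h = (\<lambda>j. h j - form m n w h * w j)"

lemma refl_RR: "refl_h m n k h = RR m n (coroot m k) h"
  by (simp add: refl_h_def RR_def sroot_def)

lemma form_RR: "form m n v (RR m n w h) = form m n v h - form m n w h * form m n v w"
  unfolding RR_def by (rule form_lin)

lemma RR_invol: "form m n c c = 2 \<Longrightarrow> RR m n c (RR m n c h) = h"
proof (rule ext)
  fix j assume "form m n c c = 2"
  then show "RR m n c (RR m n c h) j = h j" unfolding RR_def form_lin by (simp add: algebra_simps)
qed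

lemma RR_comm: "form m n c d = 0 \<Longrightarrow> RR m n c (RR m n d h) = RR m n d (RR m n c h)"
proof (rule ext)
  fix j assume a: "form m n c d = 0"
  then have b: "form m n d c = 0" by (simp add: form_sym)
  show "RR m n c (RR m n d h) j = RR m n d (RR m n c h) j" unfolding RR_def form_lin a b by (simp add: algebra_simps)
qed

lemma RR_braid: "form m n c c = 2 \<Longrightarrow> form m n d d = 2 \<Longrightarrow> form m n c d = -1 \<Longrightarrow>
   RR m n c (RR m n d (RR m n c h)) = RR m n d (RR m n c (RR m n d h))"
proof -
  assume a: "form m n c c = 2" "form m n d d = 2" "form m n c d = -1"
  then have b: "form m n d c = -1" by (simp add: form_sym)
  show ?thesis unfolding RR_def form_lin a b by (rule ext) (simp add: algebra_simps)
qed

lemma refl_k: "1 \<le> k \<Longrightarrow> k < n \<Longrightarrow> refl_h m n k h = h \<circ> sw k"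
  by (rule ext) (simp add: refl_h_def sroot_def form_corootk, auto simp: coroot_def sw_def)

lemma sroot_k: "1 \<le> k \<Longrightarrow> k < n \<Longrightarrow> sroot m n k h = h k - h (k+1)"
  by (simp add: sroot_def form_corootk)

lemma sroot0_refl: "sroot m n 0 (refl_h m n l h) = sroot m n 0 h - sroot m n l h * form m n (coroot m 0) (coroot m l)"
  by (simp add: refl_RR sroot_def form_RR)

lemma form_cc: "i < n \<Longrightarrow> j < n \<Longrightarrow> m < n \<Longrightarrow> 1 \<le> m \<Longrightarrow>
  form m n (coroot m i) (coroot m j) = (if i = j then 2 else if joined m n i j then -1 else 0)"
  apply (cases "i = 0"; cases "j = 0")
     apply (simp add: form_c0c0)
    apply (simp add: form_c0ck joined_def)
   apply (subst form_sym) apply (simp add: form_c0ck joined_def)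
  apply (simp add: form_ckcl) apply (auto simp: coroot_def joined_def)
  done

lemma Phi_0: "Phi br m n 0 (h,f,\<tau>) = (if \<forall>i\<in>{1..m}. f i \<noteq> 0 then Some (refl_h m n 0 h,
   (\<lambda>i. if i\<in>{1..m} then 1/f i else f i), (\<lambda>j. if j\<in>{1..m} then \<tau> j * f j else \<tau> j)) else None)"
  by (simp add: Phi_def)

lemma Phi_m: "m \<noteq> 0 \<Longrightarrow> Phi br m n m (h,f,\<tau>) = (if \<tau> (m+1) \<noteq> 0 \<and> br (sroot m n 0 h) \<noteq> 0 \<and> (\<forall>i\<in>{1..<m}. br (eps2 m n i m h) \<noteq> 0)
   then Some (refl_h m n m h, fm br m n (h,f,\<tau>), \<tau> \<circ> sw m) else None)"
  by (simp add: Phi_def)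

lemma Phi_k: "k \<noteq> 0 \<Longrightarrow> k \<noteq> m \<Longrightarrow> Phi br m n k (h,f,\<tau>) = Some (refl_h m n k h, (if k < m then f \<circ> sw k else f), \<tau> \<circ> sw k)"
  by (simp add: Phi_def)

lemma fm_lt: "1 \<le> i \<Longrightarrow> i < m \<Longrightarrow> m < n \<Longrightarrow> fm br m n (h,f,\<tau>) i = \<tau> m / \<tau> (m+1) *
   ((br (sroot m n 0 h + (h m - h (m+1))) * br (h i - h (m+1)) * f i - br (sroot m n 0 h + (h i - h (m+1))) * br (h m - h (m+1)) * f m)
    / (br (sroot m n 0 h) * br (h i - h m)))"
  by (simp add: fm_def eps2_def eps_val)

lemma fm_m: "m \<noteq> 0 \<Longrightarrow> fm br m n (h,f,\<tau>) m = \<tau> m / \<tau> (m+1) * f m"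
  by (simp add: fm_def)

lemma fm_other: "m \<noteq> 0 \<Longrightarrow> i = 0 \<or> m < i \<Longrightarrow> fm br m n (h,f,\<tau>) i = f i"
  by (auto simp: fm_def)

lemma eps2_val: "1 \<le> i \<Longrightarrow> i \<le> n \<Longrightarrow> 1 \<le> j \<Longrightarrow> j \<le> n \<Longrightarrow> eps2 m n i j h = h i - h j"
  by (simp add: eps2_def eps_val)

lemma sroot0_refl_m: "1 \<le> m \<Longrightarrow> m < n \<Longrightarrow> sroot m n 0 (refl_h m n m h) = sroot m n 0 h + (h m - h (m+1))"
  by (simp add: sroot0_refl sroot_k form_c0ck)

lemma sroot0_refl_k: "1 \<le> k \<Longrightarrow> k < n \<Longrightarrow> k \<noteq> m \<Longrightarrow> sroot m n 0 (refl_h m n k h) = sroot m n 0 h"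
  by (simp add: sroot0_refl sroot_k form_c0ck)

lemma sroot0_refl_0: "m \<le> n \<Longrightarrow> sroot m n 0 (refl_h m n 0 h) = - sroot m n 0 h"
  by (simp add: sroot0_refl form_c0c0)

lemma refl_0_val: "refl_h m n 0 h j = (if 1 \<le> j \<and> j \<le> m then h j + sroot m n 0 h else if j = 0 then h 0 - sroot m n 0 h else h j)"
  by (simp add: refl_h_def coroot_def)

lemma refl_k_val: "1 \<le> k \<Longrightarrow> k < n \<Longrightarrow> refl_h m n k h j = h (sw k j)"
  by (simp add: refl_k)

lemma br_odd_diff: fixes br :: "complex \<Rightarrow> complex" shows "\<forall>x. br (- x) = - br x \<Longrightarrow> br (y - x) = - br (x - y)"
proof -
  assume o: "\<forall>x. br (- x) = - br x"
  have "br (y - x) = br (- (x - y))" by (simp add: minus_diff_eq)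
  also have "\<dots> = - br (x - y)" using o by blast
  finally show ?thesis .
qed

lemma rel_mm:
  assumes m3: "3 \<le> m" and mn: "m < n" and odd: "\<forall>x. br (- x) = - br x"
  shows "rel_holds (Phi br m n) [m, m] []"
  unfolding rel_holds_def
proof (intro allI impI)
  fix p q r
  assume A: "actW (Phi br m n) [m, m] p = Some q" and B: "actW (Phi br m n) [] p = Some r"
  obtain h f \<tau> where p: "p = (h, f, \<tau>)" by (cases p)
  from B p have r: "r = (h, f, \<tau>)" by simp
  have m0: "m \<noteq> 0" using m3 by simp
  from A p m0 obtain c1: "\<tau> (m+1) \<noteq> 0" "br (sroot m n 0 h) \<noteq> 0" "\<forall>i\<in>{1..<m}. br (eps2 m n i m h) \<noteq> 0"
    and c2: "\<tau> m \<noteq> 0" "br (sroot m n 0 (refl_h m n m h)) \<noteq> 0" "\<forall>i\<in>{1..<m}. br (eps2 m n i m (refl_h m n m h)) \<noteq> 0"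
    and q: "q = (refl_h m n m (refl_h m n m h), fm br m n (refl_h m n m h, fm br m n (h,f,\<tau>), \<tau> \<circ> sw m), \<tau> \<circ> sw m \<circ> sw m)"
    by (auto simp: Phi_m sw_def split: if_splits)
  have hh: "refl_h m n m (refl_h m n m h) = h"
    unfolding refl_RR by (rule RR_invol) (use mn m3 in \<open>simp add: form_cc\<close>)
  have tt: "\<tau> \<circ> sw m \<circ> sw m = \<tau>" by (rule ext) (simp add: sw_def)
  have ff: "fm br m n (refl_h m n m h, fm br m n (h,f,\<tau>), \<tau> \<circ> sw m) = f"
  proof (rule ext)
    fix i
    consider "i = 0 \<or> m < i" | "1 \<le> i \<and> i < m" | "i = m" by linarith
    then show "fm br m n (refl_h m n m h, fm br m n (h,f,\<tau>), \<tau> \<circ> sw m) i = f i"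
    proof cases
      case 1 then show ?thesis using m0 by (simp add: fm_other)
    next
      case 3 then show ?thesis using m0 c1 c2 by (simp add: fm_m sw_def)
    next
      case 2
      have c1i: "br (h i - h m) \<noteq> 0" using c1(3) 2 mn by (simp add: eps2_val)
      have c2i: "br (h i - h (m+1)) \<noteq> 0" using c2(3) 2 mn by (simp add: eps2_val refl_k sw_def)
      have c2a: "br (sroot m n 0 h + (h m - h (m+1))) \<noteq> 0" using c2(2) 2 mn m3 by (simp add: sroot0_refl_m)
      show ?thesis using 2 mn m3 c1 c2(1) c1i c2i c2a
        apply (simp add: fm_lt fm_m refl_k_val sroot0_refl_m sw_def)
        apply (simp add: br_odd_diff[OF odd, of "h (Suc m)"])
        apply (simp add: field_simps)
        done
    qed
  qed
  show "q = r" using q r hh tt ff by simp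
qed

lemma refl_invol: "k < n \<Longrightarrow> m < n \<Longrightarrow> 1 \<le> m \<Longrightarrow> refl_h m n k (refl_h m n k h) = h"
  unfolding refl_RR by (rule RR_invol) (simp add: form_cc)

lemma refl_comm: "i < n \<Longrightarrow> j < n \<Longrightarrow> m < n \<Longrightarrow> 1 \<le> m \<Longrightarrow> i \<noteq> j \<Longrightarrow> \<not> joined m n i j \<Longrightarrow>
   refl_h m n i (refl_h m n j h) = refl_h m n j (refl_h m n i h)"
  unfolding refl_RR by (rule RR_comm) (simp add: form_cc)

lemma refl_braid: "i < n \<Longrightarrow> j < n \<Longrightarrow> m < n \<Longrightarrow> 1 \<le> m \<Longrightarrow> joined m n i j \<Longrightarrow>
   refl_h m n i (refl_h m n j (refl_h m n i h)) = refl_h m n j (refl_h m n i (refl_h m n j h))"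
  unfolding refl_RR by (rule RR_braid) (auto simp: form_cc joined_def)

lemma rel_sym: "rel_holds \<Phi> w1 w2 \<Longrightarrow> rel_holds \<Phi> w2 w1"
  unfolding rel_holds_def by metis

lemma rel_00:
  assumes m3: "3 \<le> m" and mn: "m < n"
  shows "rel_holds (Phi br m n) [0, 0] []"
  unfolding rel_holds_def
proof (intro allI impI)
  fix p q r
  assume A: "actW (Phi br m n) [0, 0] p = Some q" and B: "actW (Phi br m n) [] p = Some r"
  obtain h f \<tau> where p: "p = (h, f, \<tau>)" by (cases p)
  from B p have r: "r = (h, f, \<tau>)" by simp
  from A B p show "q = r" using mn m3 by (auto simp: Phi_0 refl_invol fun_eq_iff split: if_splits)
qed

lemma rel_kk:
  assumes m3: "3 \<le> m" and mn: "m < n" and k: "1 \<le> k" "k < n" "k \<noteq> m"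
  shows "rel_holds (Phi br m n) [k, k] []"
  unfolding rel_holds_def
proof (intro allI impI)
  fix p q r
  assume A: "actW (Phi br m n) [k, k] p = Some q" and B: "actW (Phi br m n) [] p = Some r"
  obtain h f \<tau> where p: "p = (h, f, \<tau>)" by (cases p)
  from B p have r: "r = (h, f, \<tau>)" by simp
  have sw2: "\<And>g::nat\<Rightarrow>complex. g \<circ> sw k \<circ> sw k = g" by (rule ext) (simp add: sw_def)
  from A p k show "q = r" unfolding r using mn m3 by (auto simp: Phi_k refl_invol sw2)
qed

lemma sw_comm: "k + 1 < l \<or> l + 1 < k \<Longrightarrow> sw k (sw l j) = sw l (sw k j)"
  by (auto simp: sw_def)

lemma sw_braid: "sw k (sw (k+1) (sw k j)) = sw (k+1) (sw k (sw (k+1) j))"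
  by (auto simp: sw_def)

lemma rel_kl:
  assumes m3: "3 \<le> m" and mn: "m < n" and k: "1 \<le> k" "k < n" "k \<noteq> m" and l: "1 \<le> l" "l < n" "l \<noteq> m"
    and kl: "k + 1 < l \<or> l + 1 < k"
  shows "rel_holds (Phi br m n) [k, l] [l, k]"
  unfolding rel_holds_def
proof (intro allI impI)
  fix p q r
  assume A: "actW (Phi br m n) [k, l] p = Some q" and B: "actW (Phi br m n) [l, k] p = Some r"
  obtain h f \<tau> where p: "p = (h, f, \<tau>)" by (cases p)
  have nj: "\<not> joined m n k l" "k \<noteq> l" using kl k l by (auto simp: joined_def)
  have sc: "\<And>g::nat\<Rightarrow>complex. g \<circ> sw k \<circ> sw l = g \<circ> sw l \<circ> sw k" by (rule ext) (simp add: sw_comm[OF kl])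
  from A B p k l show "q = r" using mn m3 refl_comm[OF k(2) l(2) mn _ nj(2) nj(1)] by (auto simp: Phi_k sc)
qed

lemma rel_kk1:
  assumes m3: "3 \<le> m" and mn: "m < n" and k: "1 \<le> k" "k + 1 < n" "k \<noteq> m" "k + 1 \<noteq> m"
  shows "rel_holds (Phi br m n) [k, k+1, k] [k+1, k, k+1]"
  unfolding rel_holds_def
proof (intro allI impI)
  fix p q r
  assume A: "actW (Phi br m n) [k, k+1, k] p = Some q" and B: "actW (Phi br m n) [k+1, k, k+1] p = Some r"
  obtain h f \<tau> where p: "p = (h, f, \<tau>)" by (cases p)
  have jn: "joined m n k (k+1)" using k by (simp add: joined_def)
  have sb: "\<And>g::nat\<Rightarrow>complex. g \<circ> sw k \<circ> sw (Suc k) \<circ> sw k = g \<circ> sw (Suc k) \<circ> sw k \<circ> sw (Suc k)"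
    by (rule ext) (simp add: sw_def)
  have km: "k < m \<longleftrightarrow> k + 1 < m" using k by linarith
  from A B p k show "q = r" using mn m3 refl_braid[OF _ k(2) mn _ jn] km by (auto simp: Phi_k sb)
qed

lemma rel_0k:
  assumes m3: "3 \<le> m" and mn: "m < n" and k: "1 \<le> k" "k < n" "k \<noteq> m"
  shows "rel_holds (Phi br m n) [0, k] [k, 0]"
  unfolding rel_holds_def
proof (intro allI impI)
  fix p q r
  assume A: "actW (Phi br m n) [0, k] p = Some q" and B: "actW (Phi br m n) [k, 0] p = Some r"
  obtain h f \<tau> where p: "p = (h, f, \<tau>)" by (cases p)
  have nj: "\<not> joined m n 0 k" using k by (auto simp: joined_def)
  have hc: "refl_h m n 0 (refl_h m n k h) = refl_h m n k (refl_h m n 0 h)"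
    using refl_comm[OF _ k(2) mn _ _ nj] k m3 mn by simp
  have swin: "\<And>j. sw k j \<in> {1..m} \<longleftrightarrow> j \<in> {1..m}" using k by (auto simp: sw_def)
  have swfix: "\<And>j. m < k \<Longrightarrow> j \<le> m \<Longrightarrow> sw k j = j" by (auto simp: sw_def)
  from A B p k show "q = r" using hc swin swfix by (auto simp: Phi_0 Phi_k fun_eq_iff split: if_splits)
qed

lemma rel_mk:
  assumes m3: "3 \<le> m" and mn: "m < n" and k: "1 \<le> k" "k < n" "k + 1 < m \<or> m + 1 < k"
  shows "rel_holds (Phi br m n) [m, k] [k, m]"
  unfolding rel_holds_def
proof (intro allI impI)
  fix p q r
  assume A: "actW (Phi br m n) [m, k] p = Some q" and B: "actW (Phi br m n) [k, m] p = Some r"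
  obtain h f \<tau> where p: "p = (h, f, \<tau>)" by (cases p)
  have m0: "m \<noteq> 0" and km: "k \<noteq> m" and k0: "k \<noteq> 0" using m3 k by auto
  have nj: "\<not> joined m n m k" using k by (auto simp: joined_def)
  have hc: "refl_h m n m (refl_h m n k h) = refl_h m n k (refl_h m n m h)"
    using refl_comm[OF mn k(2) mn _ _ nj] k m3 km by simp
  have sc: "\<And>g::nat\<Rightarrow>complex. g \<circ> sw m \<circ> sw k = g \<circ> sw k \<circ> sw m" by (rule ext) (use k in \<open>auto simp: sw_def\<close>)
  have swm: "sw k m = m" "sw k (Suc m) = Suc m" "sw k 0 = 0" using k by (auto simp: sw_def)
  define F where "F = (if k < m then f \<circ> sw k else f)"
  from A p m0 km k0 obtain q: "q = (refl_h m n k (refl_h m n m h), (if k < m then fm br m n (h,f,\<tau>) \<circ> sw k else fm br m n (h,f,\<tau>)), \<tau> \<circ> sw m \<circ> sw k)"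
    by (auto simp: Phi_m Phi_k split: if_splits)
  from B p m0 km k0 obtain r: "r = (refl_h m n m (refl_h m n k h), fm br m n (refl_h m n k h, F, \<tau> \<circ> sw k), \<tau> \<circ> sw k \<circ> sw m)"
    by (auto simp: Phi_m Phi_k F_def split: if_splits)
  have ff: "(if k < m then fm br m n (h,f,\<tau>) \<circ> sw k else fm br m n (h,f,\<tau>)) = fm br m n (refl_h m n k h, F, \<tau> \<circ> sw k)"
  proof (rule ext)
    fix i
    consider "i = 0 \<or> m < i" | "1 \<le> i \<and> i < m" | "i = m" by linarith
    then show "(if k < m then fm br m n (h,f,\<tau>) \<circ> sw k else fm br m n (h,f,\<tau>)) i = fm br m n (refl_h m n k h, F, \<tau> \<circ> sw k) i"
    proof cases
      case 1
      have "sw k i = i \<or> k > m" using 1 k by (auto simp: sw_def)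
      then show ?thesis using 1 m0 by (auto simp: fm_other F_def)
    next
      case 3 then show ?thesis using m0 swm by (simp add: fm_m F_def)
    next
      case 2
      show ?thesis
      proof (cases "k < m")
        case True
        have j: "1 \<le> sw k i" "sw k i < m" using 2 k True by (auto simp: sw_def)
        show ?thesis using True 2 j mn k km swm by (simp add: fm_lt F_def refl_k_val sroot0_refl_k)
      next
        case False
        have swi: "sw k i = i" using 2 False k by (auto simp: sw_def)
        show ?thesis using False 2 mn k km swm swi by (simp add: fm_lt F_def refl_k_val sroot0_refl_k)
      qed
    qed
  qed
  show "q = r" unfolding q r using hc sc ff by simp
qed

lemma fm_lt_gen:
  assumes "1 \<le> i" "i < m" "m < n" "sroot m n 0 h = A" "h m - h (m+1) = D" "h i - h (m+1) = Di" "h i - h m = E"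
    "A + D = AD" "A + Di = ADi"
  shows "fm br m n (h,f,\<tau>) i = \<tau> m / \<tau> (m+1) * ((br AD * br Di * f i - br ADi * br D * f m) / (br A * br E))"
proof -
  have "fm br m n (h,f,\<tau>) i = \<tau> m / \<tau> (m+1) *
   ((br (sroot m n 0 h + (h m - h (m+1))) * br (h i - h (m+1)) * f i - br (sroot m n 0 h + (h i - h (m+1))) * br (h m - h (m+1)) * f m)
    / (br (sroot m n 0 h) * br (h i - h m)))" using assms by (simp only: fm_lt)
  also have "\<dots> = \<tau> m / \<tau> (m+1) * ((br AD * br Di * f i - br ADi * br D * f m) / (br A * br E))"
    unfolding assms(4-9) ..
  finally show ?thesis .
qed

lemma Phi_m_cond:
  assumes "Phi br m n m (h,f,\<tau>) \<noteq> None" "m \<noteq> 0" "m < n"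
  shows "\<tau> (m+1) \<noteq> 0" "br (sroot m n 0 h) \<noteq> 0" "\<And>i. 1 \<le> i \<Longrightarrow> i < m \<Longrightarrow> br (h i - h m) \<noteq> 0"
  using assms by (auto simp: Phi_m eps2_val split: if_splits)

lemma Phi_m_Some:
  assumes "Phi br m n m (h,f,\<tau>) \<noteq> None" "m \<noteq> 0"
  shows "Phi br m n m (h,f,\<tau>) = Some (refl_h m n m h, fm br m n (h,f,\<tau>), \<tau> \<circ> sw m)"
  using assms by (auto simp: Phi_m split: if_splits)

lemma Phi_0_cond:
  assumes "Phi br m n 0 (h,f,\<tau>) \<noteq> None"
  shows "\<And>i. 1 \<le> i \<Longrightarrow> i \<le> m \<Longrightarrow> f i \<noteq> 0"
  using assms by (auto simp: Phi_0 split: if_splits)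

lemma Phi_0_Some:
  assumes "Phi br m n 0 (h,f,\<tau>) \<noteq> None"
  shows "Phi br m n 0 (h,f,\<tau>) = Some (refl_h m n 0 h, (\<lambda>i. if i\<in>{1..m} then 1/f i else f i), (\<lambda>j. if j\<in>{1..m} then \<tau> j * f j else \<tau> j))"
  using assms by (auto simp: Phi_0 split: if_splits)

lemma actW_Cons_Some: "actW \<Phi> (k # ks) p = Some q \<Longrightarrow> \<Phi> k p \<noteq> None"
  by (cases "\<Phi> k p") auto

lemma actW_step: "\<Phi> k p = Some p' \<Longrightarrow> actW \<Phi> (k # ks) p = actW \<Phi> ks p'"
  by simp

lemma rel_0m:
  assumes m3: "3 \<le> m" and mn: "m < n" and odd: "\<forall>x. br (- x) = - br x"
  shows "rel_holds (Phi br m n) [0, m, 0] [m, 0, m]"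
  unfolding rel_holds_def
proof (intro allI impI)
  fix p q r
  assume A: "actW (Phi br m n) [0, m, 0] p = Some q" and B: "actW (Phi br m n) [m, 0, m] p = Some r"
  obtain h f \<tau> where p: "p = (h, f, \<tau>)" by (cases p)
  have m0: "m \<noteq> 0" using m3 by simp
  define a where "a = sroot m n 0 h"
  define d where "d = h m - h (Suc m)"
  have oddm: "\<And>x. br (- x) = - br x" using odd by blast
  define f1 where "f1 = (\<lambda>i. if i\<in>{1..m} then 1/f i else f i)"
  define \<tau>1 where "\<tau>1 = (\<lambda>j. if j\<in>{1..m} then \<tau> j * f j else \<tau> j)"
  define h1 where "h1 = refl_h m n 0 h"
  have A0: "Phi br m n 0 (h,f,\<tau>) \<noteq> None" using A unfolding p by (rule actW_Cons_Some)
  have cf: "\<And>i. 1 \<le> i \<Longrightarrow> i \<le> m \<Longrightarrow> f i \<noteq> 0" using Phi_0_cond[OF A0] .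
  have A1: "actW (Phi br m n) [m, 0] (h1, f1, \<tau>1) = Some q"
    using A p Phi_0_Some[OF A0] by (simp add: f1_def \<tau>1_def h1_def)
  have A1n: "Phi br m n m (h1, f1, \<tau>1) \<noteq> None" using A1 by (rule actW_Cons_Some)
  note c1 = Phi_m_cond[OF A1n m0 mn]
  define f2 where "f2 = fm br m n (h1, f1, \<tau>1)"
  define \<tau>2 where "\<tau>2 = \<tau>1 \<circ> sw m"
  define h2 where "h2 = refl_h m n m h1"
  have A2: "actW (Phi br m n) [0] (h2, f2, \<tau>2) = Some q"
    using A1 Phi_m_Some[OF A1n m0] by (simp add: f2_def \<tau>2_def h2_def)
  have A2n: "Phi br m n 0 (h2, f2, \<tau>2) \<noteq> None" using A2 by (rule actW_Cons_Some)
  have cf2: "\<And>i. 1 \<le> i \<Longrightarrow> i \<le> m \<Longrightarrow> f2 i \<noteq> 0" using Phi_0_cond[OF A2n] .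
  have q: "q = (refl_h m n 0 h2, (\<lambda>i. if i\<in>{1..m} then 1/f2 i else f2 i), (\<lambda>j. if j\<in>{1..m} then \<tau>2 j * f2 j else \<tau>2 j))"
    using A2 Phi_0_Some[OF A2n] by simp
  have B0: "Phi br m n m (h,f,\<tau>) \<noteq> None" using B unfolding p by (rule actW_Cons_Some)
  note c3 = Phi_m_cond[OF B0 m0 mn]
  define F1 where "F1 = fm br m n (h, f, \<tau>)"
  define T1 where "T1 = \<tau> \<circ> sw m"
  define h' where "h' = refl_h m n m h"
  have B1: "actW (Phi br m n) [0, m] (h', F1, T1) = Some r"
    using B p Phi_m_Some[OF B0 m0] by (simp add: F1_def T1_def h'_def)
  have B1n: "Phi br m n 0 (h', F1, T1) \<noteq> None" using B1 by (rule actW_Cons_Some)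
  have cF1: "\<And>i. 1 \<le> i \<Longrightarrow> i \<le> m \<Longrightarrow> F1 i \<noteq> 0" using Phi_0_cond[OF B1n] .
  define G where "G = (\<lambda>i. if i\<in>{1..m} then 1/F1 i else F1 i)"
  define T2 where "T2 = (\<lambda>j. if j\<in>{1..m} then T1 j * F1 j else T1 j)"
  define h'' where "h'' = refl_h m n 0 h'"
  have B2: "actW (Phi br m n) [m] (h'', G, T2) = Some r"
    using B1 Phi_0_Some[OF B1n] by (simp add: G_def T2_def h''_def)
  have B2n: "Phi br m n m (h'', G, T2) \<noteq> None" using B2 by (rule actW_Cons_Some)
  note c4 = Phi_m_cond[OF B2n m0 mn]
  have r: "r = (refl_h m n m h'', fm br m n (h'', G, T2), T2 \<circ> sw m)"
    using B2 Phi_m_Some[OF B2n m0] by simp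
  have h1v: "\<And>j. 1 \<le> j \<Longrightarrow> j \<le> m \<Longrightarrow> h1 j = h j + a" "h1 (Suc m) = h (Suc m)" "sroot m n 0 h1 = - a"
    using mn by (auto simp: h1_def a_def refl_0_val sroot0_refl_0)
  have h'v: "\<And>j. h' j = h (sw m j)" "sroot m n 0 h' = a + d"
    using mn m3 by (auto simp: h'_def a_def d_def refl_k_val sroot0_refl_m)
  have h''v: "\<And>j. 1 \<le> j \<Longrightarrow> j \<le> m \<Longrightarrow> h'' j = h' j + (a + d)" "h'' (Suc m) = h m" "sroot m n 0 h'' = - (a + d)"
    using mn h'v by (auto simp: h''_def refl_0_val sroot0_refl_0 sw_def)
  have hq: "refl_h m n 0 h2 = refl_h m n m h''"
    unfolding h2_def h1_def h''_def h'_def using refl_braid[of 0 n m m h] mn m3 by (simp add: joined_def)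
  have nz: "\<tau> (Suc m) \<noteq> 0" "\<tau> m \<noteq> 0" "br a \<noteq> 0" "br (a + d) \<noteq> 0" "f m \<noteq> 0"
    using c3(1,2) c4(1,2) cf[of m] m3 oddm[of "a + d"] h''v(3) by (auto simp: a_def T2_def T1_def sw_def)
  have gen: "1 / f2 i = fm br m n (h'', G, T2) i \<and> f2 i * f i = F1 i" if 2: "1 \<le> i \<and> i < m" for i
  proof -
      define Di where "Di = h i - h (Suc m)"
    define E where "E = h i - h m"
    have nzi: "f i \<noteq> 0" "br E \<noteq> 0" "br Di \<noteq> 0" "F1 i \<noteq> 0"
      using cf[of i] c3(3)[of i] c4(3)[of i] cF1[of i] 2 h''v h'v
      by (auto simp: E_def Di_def sw_def d_def algebra_simps)
    have f2i: "f2 i = \<tau>1 m / \<tau>1 (m+1) * ((br d * br (a + Di) * f1 i - br Di * br (a + d) * f1 m) / (br (- a) * br E))"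
      unfolding f2_def by (rule fm_lt_gen) (use 2 mn h1v in \<open>simp_all add: Di_def E_def d_def algebra_simps\<close>)
    have F1i: "F1 i = \<tau> m / \<tau> (m+1) * ((br (a + d) * br Di * f i - br (a + Di) * br d * f m) / (br a * br E))"
      unfolding F1_def by (rule fm_lt_gen) (use 2 mn in \<open>simp_all add: Di_def E_def d_def a_def\<close>)
    have Gi: "fm br m n (h'', G, T2) i = T2 m / T2 (m+1) * ((br (- d) * br (a + Di) * G i - br E * br a * G m) / (br (- (a + d)) * br Di))"
      proof (rule fm_lt_gen)
      have hv: "h'' m = h (Suc m) + (a + d)" "h'' i = h i + (a + d)"
        using h''v(1)[of m] h''v(1)[of i] h'v(1)[of m] h'v(1)[of i] 2 m3 by (auto simp: sw_def)
      show "h'' m - h'' (m + 1) = a" "h'' i - h'' (m + 1) = a + Di" "h'' i - h'' m = Di"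
        "- (a + d) + a = - d" "- (a + d) + (a + Di) = E"
        using hv h''v(2) by (simp_all add: Di_def E_def d_def algebra_simps)
    qed (use 2 mn h''v(3) in auto)
    have T2v: "T2 m = \<tau> (Suc m) * F1 m" "T2 (m+1) = \<tau> m" "G i = 1 / F1 i" "G m = 1 / F1 m"
      using m3 2 by (auto simp: T2_def T1_def G_def sw_def)
    have F1m: "F1 m = \<tau> m / \<tau> (Suc m) * f m" using m0 by (simp add: F1_def fm_m)
    have v1: "\<tau>1 m = \<tau> m * f m" "\<tau>1 (m+1) = \<tau> (Suc m)" "f1 i = 1 / f i" "f1 m = 1 / f m"
      using m3 2 by (auto simp: \<tau>1_def f1_def)
    have o: "br (- a) = - br a" "br (- d) = - br d" "br (- (a + d)) = - br (a + d)" using oddm by blast+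
    have key: "br (a + d) * br Di * f i - br (a + Di) * br d * f m \<noteq> 0"
      using nzi(4) F1i by auto
    have r1: "1 / f2 i = fm br m n (h'', G, T2) i" unfolding Gi f2i T2v F1m v1 o F1i
      using nz nzi key by (simp add: field_simps)
    have r2: "f2 i * f i = F1 i" unfolding f2i v1 o F1i
      using nz nzi key by (simp add: field_simps)
    show "1 / f2 i = fm br m n (h'', G, T2) i \<and> f2 i * f i = F1 i" using r1 r2 by blast
  qed
  have ff: "(\<lambda>i. if i\<in>{1..m} then 1/f2 i else f2 i) = fm br m n (h'', G, T2)"
  proof (rule ext)
    fix i
    consider "i = 0 \<or> m < i" | "1 \<le> i \<and> i < m" | "i = m" by linarith
    then show "(if i\<in>{1..m} then 1/f2 i else f2 i) = fm br m n (h'', G, T2) i"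
    proof cases
      case 1 then show ?thesis using m0 by (auto simp: fm_other f2_def G_def F1_def f1_def)
    next
      case 3
      have "T2 m = \<tau> m * f m" "T2 (Suc m) = \<tau> m"
        using m3 nz by (auto simp: T2_def T1_def F1_def fm_m sw_def)
      then show ?thesis using 3 m0 nz by (simp add: fm_m f2_def G_def F1_def f1_def \<tau>1_def)
    next
      case 2 then show ?thesis using gen by simp
    qed
  qed
  have tt: "(\<lambda>j. if j\<in>{1..m} then \<tau>2 j * f2 j else \<tau>2 j) = T2 \<circ> sw m"
  proof (rule ext)
    fix j
    consider "j = 0 \<or> m + 1 < j" | "1 \<le> j \<and> j < m" | "j = m" | "j = m + 1" by linarith
    then show "(if j\<in>{1..m} then \<tau>2 j * f2 j else \<tau>2 j) = (T2 \<circ> sw m) j"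
    proof cases
      case 1 then show ?thesis using m0 by (auto simp: \<tau>2_def T2_def \<tau>1_def T1_def sw_def)
    next
      case 2
      have "\<tau>2 j = \<tau> j * f j" "(T2 \<circ> sw m) j = \<tau> j * F1 j" using 2 by (auto simp: \<tau>2_def T2_def \<tau>1_def T1_def sw_def)
      then show ?thesis using 2 gen[OF 2] by (simp add: algebra_simps)
    next
      case 3
      have "f2 m = \<tau> m * f m / \<tau> (Suc m) * (1 / f m)" using m0 m3 by (simp add: f2_def fm_m \<tau>1_def f1_def)
      then show ?thesis using 3 m3 nz by (auto simp: \<tau>2_def T2_def \<tau>1_def T1_def sw_def)
    next
      case 4
      have "F1 m = \<tau> m / \<tau> (Suc m) * f m" using m0 by (simp add: F1_def fm_m)
      then show ?thesis using 4 m3 nz by (auto simp: \<tau>2_def T2_def \<tau>1_def T1_def sw_def)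
    qed
  qed
  show "q = r" unfolding q r using hq ff tt by simp
qed

lemma rel_m1:
  assumes m3: "3 \<le> m" and mn: "m < n" and odd: "\<forall>x. br (- x) = - br x"
  shows "rel_holds (Phi br m n) [m - 1, m, m - 1] [m, m - 1, m]"
  unfolding rel_holds_def
proof (intro allI impI)
  fix p q r
  define k where "k = m - 1"
  have mk: "m = Suc k" and k1: "1 \<le> k" and k0: "k \<noteq> 0" and km: "k \<noteq> m" "k < m" using m3 by (auto simp: k_def)
  assume A: "actW (Phi br m n) [m - 1, m, m - 1] p = Some q" and B: "actW (Phi br m n) [m, m - 1, m] p = Some r"
  then have A: "actW (Phi br m n) [k, m, k] p = Some q" and B: "actW (Phi br m n) [m, k, m] p = Some r"
    by (simp_all add: k_def)
  obtain h f \<tau> where p: "p = (h, f, \<tau>)" by (cases p)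
  have m0: "m \<noteq> 0" using m3 by simp
  define a where "a = sroot m n 0 h"
  define d where "d = h m - h (Suc m)"
  have oddm: "\<And>x. br (- x) = - br x" using odd by blast
  have swkm: "sw k k = m" "sw k m = k" "sw m m = Suc m" "sw m (Suc m) = m" "sw k (Suc m) = Suc m" "sw m k = k"
    using mk by (auto simp: sw_def)
  define f1 where "f1 = f \<circ> sw k"
  define \<tau>1 where "\<tau>1 = \<tau> \<circ> sw k"
  define h1 where "h1 = refl_h m n k h"
  have A1: "actW (Phi br m n) [m, k] (h1, f1, \<tau>1) = Some q"
    using A p km k0 by (simp add: f1_def \<tau>1_def h1_def Phi_k)
  have A1n: "Phi br m n m (h1, f1, \<tau>1) \<noteq> None" using A1 by (rule actW_Cons_Some)
  note c1 = Phi_m_cond[OF A1n m0 mn]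
  define f2 where "f2 = fm br m n (h1, f1, \<tau>1)"
  define \<tau>2 where "\<tau>2 = \<tau>1 \<circ> sw m"
  define h2 where "h2 = refl_h m n m h1"
  have q: "q = (refl_h m n k h2, f2 \<circ> sw k, \<tau>2 \<circ> sw k)"
    using A1 Phi_m_Some[OF A1n m0] km k0 by (simp add: f2_def \<tau>2_def h2_def Phi_k)
  have B0: "Phi br m n m (h,f,\<tau>) \<noteq> None" using B unfolding p by (rule actW_Cons_Some)
  note c3 = Phi_m_cond[OF B0 m0 mn]
  define F1 where "F1 = fm br m n (h, f, \<tau>)"
  define T1 where "T1 = \<tau> \<circ> sw m"
  define h' where "h' = refl_h m n m h"
  define G where "G = F1 \<circ> sw k"
  define T2 where "T2 = T1 \<circ> sw k"
  define h'' where "h'' = refl_h m n k h'"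
  have B2: "actW (Phi br m n) [m] (h'', G, T2) = Some r"
    using B p Phi_m_Some[OF B0 m0] km k0 by (simp add: F1_def T1_def h'_def G_def T2_def h''_def Phi_k)
  have B2n: "Phi br m n m (h'', G, T2) \<noteq> None" using B2 by (rule actW_Cons_Some)
  note c4 = Phi_m_cond[OF B2n m0 mn]
  have r: "r = (refl_h m n m h'', fm br m n (h'', G, T2), T2 \<circ> sw m)"
    using B2 Phi_m_Some[OF B2n m0] by simp
  have h1v: "\<And>j. h1 j = h (sw k j)" "sroot m n 0 h1 = a"
    using mn k1 km by (auto simp: h1_def a_def refl_k_val sroot0_refl_k)
  have h'v: "\<And>j. h' j = h (sw m j)" "sroot m n 0 h' = a + d"
    using mn m3 by (auto simp: h'_def a_def d_def refl_k_val sroot0_refl_m)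
  have h''v: "\<And>j. h'' j = h (sw m (sw k j))" "sroot m n 0 h'' = a + d"
    using mn k1 km h'v by (auto simp: h''_def refl_k_val sroot0_refl_k)
  have hq: "refl_h m n k h2 = refl_h m n m h''"
    unfolding h2_def h1_def h''_def h'_def using refl_braid[of k n m m h] mn m3 k1 mk by (simp add: joined_def)
  have tq: "\<tau>2 \<circ> sw k = T2 \<circ> sw m"
    unfolding \<tau>2_def \<tau>1_def T2_def T1_def by (rule ext) (simp add: mk sw_def)
  have nz: "\<tau> (Suc m) \<noteq> 0" "\<tau> m \<noteq> 0" "br a \<noteq> 0" "br (a + d) \<noteq> 0"
    using c3(1,2) c4(1,2) h''v(2) by (auto simp: a_def T2_def T1_def swkm)
  have nzk: "br (h k - h m) \<noteq> 0" "br (h k - h (Suc m)) \<noteq> 0"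
    using c3(3)[of k] c4(3)[of k] k1 km oddm[of "h k - h (Suc m)"] by (auto simp: h''v swkm)
  have o: "br (h m - h k) = - br (h k - h m)" "br (h (Suc m) - h k) = - br (h k - h (Suc m))"
    "br (h (Suc m) - h m) = - br d"
    using br_odd_diff[OF odd, of "h m" "h k"] br_odd_diff[OF odd, of "h (Suc m)" "h k"] br_odd_diff[OF odd, of "h (Suc m)" "h m"]
    by (simp_all add: d_def)
  have F1k: "F1 k = \<tau> m / \<tau> (m+1) * ((br (a + d) * br (h k - h (Suc m)) * f k - br (a + (h k - h (Suc m))) * br d * f m) / (br a * br (h k - h m)))"
    unfolding F1_def by (rule fm_lt_gen) (use k1 km mn in \<open>simp_all add: d_def a_def\<close>)
  have F1m: "F1 m = \<tau> m / \<tau> (Suc m) * f m" using m0 by (simp add: F1_def fm_m)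
  have ff: "f2 \<circ> sw k = fm br m n (h'', G, T2)"
  proof (rule ext)
    fix i
    consider "i = 0 \<or> m < i" | "1 \<le> i \<and> i < k" | "i = k" | "i = m" using mk by linarith
    then show "(f2 \<circ> sw k) i = fm br m n (h'', G, T2) i"
    proof cases
      case 2
      have swi: "sw k i = i" "sw m i = i" using 2 mk by (auto simp: sw_def)
      have nzi: "br (h i - h m) \<noteq> 0" "br (h i - h k) \<noteq> 0"
        using c3(3)[of i] c1(3)[of i] 2 km by (simp_all add: h1v swi swkm)
      have l: "(f2 \<circ> sw k) i = \<tau> k / \<tau> (m+1) * ((br (a + (h k - h (Suc m))) * br (h i - h (Suc m)) * f i - br (a + (h i - h (Suc m))) * br (h k - h (Suc m)) * f k) / (br a * br (h i - h k)))"
        unfolding comp_def swi f2_def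
        by (subst fm_lt_gen[where A = a and D = "h k - h (Suc m)"]) (use 2 k1 km mn h1v in \<open>simp_all add: swkm swi \<tau>1_def f1_def\<close>)
      have rr: "fm br m n (h'', G, T2) i = T2 m / T2 (m+1) * ((br (a + (h k - h (Suc m))) * br (h i - h m) * G i - br (a + (h i - h (Suc m))) * br (h k - h m) * G m) / (br (a + d) * br (h i - h k)))"
        by (rule fm_lt_gen) (use 2 k1 km mn h''v in \<open>simp_all add: swkm swi d_def algebra_simps\<close>)
      have F1i: "F1 i = \<tau> m / \<tau> (m+1) * ((br (a + d) * br (h i - h (Suc m)) * f i - br (a + (h i - h (Suc m))) * br d * f m) / (br a * br (h i - h m)))"
        unfolding F1_def by (rule fm_lt_gen) (use 2 km mn in \<open>simp_all add: d_def a_def\<close>)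
      have gv: "T2 m = \<tau> k" "T2 (m+1) = \<tau> m" "G i = F1 i" "G m = F1 k" by (simp_all add: T2_def T1_def G_def swkm swi)
      show ?thesis unfolding l rr gv F1k F1i using nz nzk nzi by (simp add: field_simps d_def)
    next
      case 1
      then have "sw k i = i" using mk k1 by (auto simp: sw_def)
      then show ?thesis using 1 m0 by (auto simp: fm_other f2_def G_def F1_def f1_def)
    next
      case 3
      have l: "(f2 \<circ> sw k) i = \<tau> k / \<tau> (Suc m) * f k" using 3 m0 by (simp add: f2_def fm_m swkm \<tau>1_def f1_def)
      have rr: "fm br m n (h'', G, T2) i = T2 m / T2 (m+1) * ((br (a + (h k - h (Suc m))) * br (h (Suc m) - h m) * G k - br a * br (h k - h m) * G m) / (br (a + d) * br (h (Suc m) - h k)))"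
        unfolding 3 by (rule fm_lt_gen) (use k1 km mn h''v in \<open>simp_all add: swkm d_def algebra_simps\<close>)
      have gv: "T2 m = \<tau> k" "T2 (m+1) = \<tau> m" "G k = F1 m" "G m = F1 k" by (simp_all add: T2_def T1_def G_def swkm)
      show ?thesis unfolding l rr gv F1k F1m o using nz nzk by (simp add: field_simps)
    next
      case 4
      have l: "(f2 \<circ> sw k) i = \<tau> k / \<tau> (m+1) * ((br (a + (h k - h (Suc m))) * br (h m - h (Suc m)) * f m - br (a + (h m - h (Suc m))) * br (h k - h (Suc m)) * f k) / (br a * br (h m - h k)))"
        unfolding 4 comp_def swkm f2_def
        by (subst fm_lt_gen[where A = a and D = "h k - h (Suc m)"]) (use k1 km mn h1v in \<open>simp_all add: swkm \<tau>1_def f1_def\<close>)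
      have rr: "fm br m n (h'', G, T2) i = \<tau> k / \<tau> m * F1 k" using 4 m0 by (simp add: fm_m G_def T2_def T1_def swkm)
      show ?thesis unfolding l rr F1k o using nz nzk by (simp add: field_simps d_def)
    qed
  qed
  show "q = r" unfolding q r using hq ff tq by simp
qed

lemma riem3:
  fixes br :: "complex \<Rightarrow> complex"
  assumes R: "\<forall>x y u v. br (x + y) * br (x - y) * br (u + v) * br (u - v)
           = br (x + u) * br (x - u) * br (y + v) * br (y - v)
             - br (x + v) * br (x - v) * br (y + u) * br (y - u)"
  shows "br (a + (q - s)) * br (p - s) * br (a + (p - r)) * br (q - r) + br (a + (q - r) + (p - s)) * br (r - s) * br a * br (p - q)
       = br (a + (p - s)) * br (q - s) * br (a + (q - r)) * br (p - r)"
proof -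
  define x where "x = a + (p + q - r - s) / 2"
  define y where "y = (p + q - r - s) / 2"
  define u where "u = (r - s + p - q) / 2"
  define v where "v = (r - s - p + q) / 2"
  have e: "x + y = a + (q - r) + (p - s)" "x - y = a" "u + v = r - s" "u - v = p - q"
    "x + u = a + (p - s)" "x - u = a + (q - r)" "y + v = q - s" "y - v = p - r"
    "x + v = a + (q - s)" "x - v = a + (p - r)" "y + u = p - s" "y - u = q - r"
    unfolding x_def y_def u_def v_def by (simp_all add: field_simps)
  have "br (x + y) * br (x - y) * br (u + v) * br (u - v)
           = br (x + u) * br (x - u) * br (y + v) * br (y - v)
             - br (x + v) * br (x - v) * br (y + u) * br (y - u)" using R by blast
  then show ?thesis unfolding e by (simp add: algebra_simps)
qed

lemma alg_mp1:
  fixes P Q R S U V A \<alpha> \<beta> \<gamma> \<delta> \<epsilon> tm tM tL fi fm :: complex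
  assumes nz: "A \<noteq> 0" "\<epsilon> \<noteq> 0" "\<alpha> \<noteq> 0" "\<beta> \<noteq> 0" "tM \<noteq> 0" "tL \<noteq> 0"
    and iden: "P * Q * \<gamma> * \<delta> + R * S * A * \<epsilon> = U * V * \<alpha> * \<beta>"
  shows "tM / tL * ((P * Q * (tm / tM * ((\<alpha> * \<beta> * fi - \<gamma> * \<delta> * fm) / (A * \<epsilon>))) - R * S * (tm / tM * fm)) / (\<alpha> * \<beta>))
       = tm / tL * ((P * Q * fi - U * V * fm) / (A * \<epsilon>))"
proof -
  have "tM / tL * ((P * Q * (tm / tM * ((\<alpha> * \<beta> * fi - \<gamma> * \<delta> * fm) / (A * \<epsilon>))) - R * S * (tm / tM * fm)) / (\<alpha> * \<beta>))
      = tm / tL * (P * Q * \<alpha> * \<beta> * fi - (P * Q * \<gamma> * \<delta> + R * S * A * \<epsilon>) * fm) / (A * \<epsilon> * \<alpha> * \<beta>)"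
    using nz by (simp add: field_simps)
  also have "\<dots> = tm / tL * (P * Q * \<alpha> * \<beta> * fi - U * V * \<alpha> * \<beta> * fm) / (A * \<epsilon> * \<alpha> * \<beta>)"
    unfolding iden ..
  also have "\<dots> = tm / tL * ((P * Q * fi - U * V * fm) / (A * \<epsilon>))"
    using nz by (simp add: field_simps)
  finally show ?thesis .
qed

lemma rel_mp1:
  assumes m3: "3 \<le> m" and mn: "m + 1 < n" and odd: "\<forall>x. br (- x) = - br x"
    and R: "\<forall>x y u v. br (x + y) * br (x - y) * br (u + v) * br (u - v)
           = br (x + u) * br (x - u) * br (y + v) * br (y - v)
             - br (x + v) * br (x - v) * br (y + u) * br (y - u)"
  shows "rel_holds (Phi br m n) [m, m + 1, m] [m + 1, m, m + 1]"
  unfolding rel_holds_def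
proof (intro allI impI)
  fix p q r
  define l where "l = Suc m"
  have l0: "l \<noteq> 0" and lm: "l \<noteq> m" "\<not> l < m" and l1: "1 \<le> l" "l < n" and mn': "m < n" using m3 mn by (auto simp: l_def)
  assume A: "actW (Phi br m n) [m, m + 1, m] p = Some q" and B: "actW (Phi br m n) [m + 1, m, m + 1] p = Some r"
  then have A: "actW (Phi br m n) [m, l, m] p = Some q" and B: "actW (Phi br m n) [l, m, l] p = Some r"
    by (simp_all add: l_def)
  obtain h f \<tau> where p: "p = (h, f, \<tau>)" by (cases p)
  have m0: "m \<noteq> 0" using m3 by simp
  define a where "a = sroot m n 0 h"
  have oddm: "\<And>x. br (- x) = - br x" using odd by blast
  have sw: "sw m m = Suc m" "sw m (Suc m) = m" "sw l m = m" "sw l (Suc m) = Suc (Suc m)" "sw m (Suc (Suc m)) = Suc (Suc m)"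
    "sw l (Suc (Suc m)) = Suc m"
    by (auto simp: sw_def l_def)
  have A0: "Phi br m n m (h,f,\<tau>) \<noteq> None" using A unfolding p by (rule actW_Cons_Some)
  note c1 = Phi_m_cond[OF A0 m0 mn']
  define F where "F = fm br m n (h, f, \<tau>)"
  define \<tau>2 where "\<tau>2 = \<tau> \<circ> sw m \<circ> sw l"
  define h2 where "h2 = refl_h m n l (refl_h m n m h)"
  have A2: "actW (Phi br m n) [m] (h2, F, \<tau>2) = Some q"
    using A p Phi_m_Some[OF A0 m0] l0 lm by (simp add: F_def \<tau>2_def h2_def Phi_k)
  have A2n: "Phi br m n m (h2, F, \<tau>2) \<noteq> None" using A2 by (rule actW_Cons_Some)
  note c2 = Phi_m_cond[OF A2n m0 mn']
  have q: "q = (refl_h m n m h2, fm br m n (h2, F, \<tau>2), \<tau>2 \<circ> sw m)"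
    using A2 Phi_m_Some[OF A2n m0] by simp
  define T1 where "T1 = \<tau> \<circ> sw l"
  define h' where "h' = refl_h m n l h"
  have B1: "actW (Phi br m n) [m, l] (h', f, T1) = Some r"
    using B p l0 lm by (simp add: T1_def h'_def Phi_k)
  have B1n: "Phi br m n m (h', f, T1) \<noteq> None" using B1 by (rule actW_Cons_Some)
  note c3 = Phi_m_cond[OF B1n m0 mn']
  have r: "r = (refl_h m n l (refl_h m n m h'), fm br m n (h', f, T1), T1 \<circ> sw m \<circ> sw l)"
    using B1 Phi_m_Some[OF B1n m0] l0 lm by (simp add: Phi_k)
  have h2v: "\<And>j. h2 j = h (sw m (sw l j))" "sroot m n 0 h2 = a + (h m - h (Suc m))"
    using mn' m3 l1 lm by (auto simp: h2_def a_def refl_k_val sroot0_refl_k sroot0_refl_m)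
  have h'v: "\<And>j. h' j = h (sw l j)" "sroot m n 0 h' = a"
    using mn' l1 lm by (auto simp: h'_def a_def refl_k_val sroot0_refl_k)
  have hq: "refl_h m n m h2 = refl_h m n l (refl_h m n m h')"
    unfolding h2_def h'_def using refl_braid[of m n l m h] mn' m3 l1 by (simp add: joined_def l_def)
  have tq: "\<tau>2 \<circ> sw m = T1 \<circ> sw m \<circ> sw l"
    unfolding \<tau>2_def T1_def by (rule ext) (simp add: l_def sw_def)
  have tv: "\<tau>2 m = \<tau> (Suc m)" "\<tau>2 (m+1) = \<tau> (Suc (Suc m))" "T1 m = \<tau> m" "T1 (m+1) = \<tau> (Suc (Suc m))"
    by (simp_all add: \<tau>2_def T1_def sw)
  have nz: "\<tau> (Suc m) \<noteq> 0" "\<tau> (Suc (Suc m)) \<noteq> 0" "br a \<noteq> 0" "br (a + (h m - h (Suc m))) \<noteq> 0"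
    using c1(1,2) c2(1,2) h2v(2) tv(2) by (auto simp: a_def)
  have Fm: "F m = \<tau> m / \<tau> (m+1) * f m" using m0 by (simp add: F_def fm_m)
  have ff: "fm br m n (h2, F, \<tau>2) = fm br m n (h', f, T1)"
  proof (rule ext)
    fix i
    consider "i = 0 \<or> m < i" | "1 \<le> i \<and> i < m" | "i = m" by linarith
    then show "fm br m n (h2, F, \<tau>2) i = fm br m n (h', f, T1) i"
    proof cases
      case 1 then show ?thesis using m0 by (auto simp: fm_other F_def)
    next
      case 3 then show ?thesis using m0 nz tv[simplified] by (simp add: fm_m Fm)
    next
      case 2
      have swi: "sw m i = i" "sw l i = i" using 2 by (auto simp: sw_def l_def)
      have nzi: "br (h i - h m) \<noteq> 0" "br (h i - h (Suc m)) \<noteq> 0"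
        using c1(3)[of i] c2(3)[of i] 2 by (simp_all add: h2v swi sw)
      have Fi: "F i = \<tau> m / \<tau> (m+1) * ((br (a + (h m - h (Suc m))) * br (h i - h (Suc m)) * f i - br (a + (h i - h (Suc m))) * br (h m - h (Suc m)) * f m) / (br a * br (h i - h m)))"
        unfolding F_def by (rule fm_lt_gen) (use 2 mn' in \<open>simp_all add: a_def\<close>)
      have l: "fm br m n (h2, F, \<tau>2) i = \<tau>2 m / \<tau>2 (m+1) * ((br (a + (h m - h (Suc (Suc m)))) * br (h i - h (Suc (Suc m))) * F i
          - br (a + (h m - h (Suc m)) + (h i - h (Suc (Suc m)))) * br (h (Suc m) - h (Suc (Suc m))) * F m) / (br (a + (h m - h (Suc m))) * br (h i - h (Suc m))))"
        by (rule fm_lt_gen) (use 2 mn' h2v in \<open>simp_all add: swi sw algebra_simps\<close>)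
      have rr: "fm br m n (h', f, T1) i = T1 m / T1 (m+1) * ((br (a + (h m - h (Suc (Suc m)))) * br (h i - h (Suc (Suc m))) * f i
          - br (a + (h i - h (Suc (Suc m)))) * br (h m - h (Suc (Suc m))) * f m) / (br a * br (h i - h m)))"
        by (rule fm_lt_gen) (use 2 mn' h'v in \<open>simp_all add: swi sw\<close>)
      have iden: "br (a + (h m - h (Suc (Suc m)))) * br (h i - h (Suc (Suc m))) * br (a + (h i - h (Suc m))) * br (h m - h (Suc m))
          + br (a + (h m - h (Suc m)) + (h i - h (Suc (Suc m)))) * br (h (Suc m) - h (Suc (Suc m))) * br a * br (h i - h m)
          = br (a + (h i - h (Suc (Suc m)))) * br (h m - h (Suc (Suc m))) * br (a + (h m - h (Suc m))) * br (h i - h (Suc m))"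
        by (rule riem3[OF R])
      show ?thesis unfolding l rr tv Fi Fm
        using alg_mp1[OF nz(3) nzi(1) nz(4) nzi(2) nz(1) nz(2) iden] by simp
    qed
  qed
  show "q = r" unfolding q r using hq ff tq by simp
qed

theorem theorem3:
  fixes br :: "complex \<Rightarrow> complex" and m n :: nat
  assumes "3 \<le> m" and "m < n"
    and "br holomorphic_on UNIV"
    and "\<forall>x. br (- x) = - br x"
    and "\<exists>x. br x \<noteq> 0"
    and "\<forall>x y u v. br (x + y) * br (x - y) * br (u + v) * br (u - v)
           = br (x + u) * br (x - u) * br (y + v) * br (y - v)
             - br (x + v) * br (x - v) * br (y + u) * br (y - u)"
  shows "(\<forall>i<n. rel_holds (Phi br m n) [i, i] [])
       \<and> (\<forall>i<n. \<forall>j<n. i \<noteq> j \<and> \<not> joined m n i j \<longrightarrow> rel_holds (Phi br m n) [i, j] [j, i])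
       \<and> (\<forall>i<n. \<forall>j<n. joined m n i j \<longrightarrow> rel_holds (Phi br m n) [i, j, i] [j, i, j])"
proof (intro conjI allI impI)
  note m3 = assms(1) and mn = assms(2) and odd = assms(4) and R = assms(6)
  show "rel_holds (Phi br m n) [i, i] []" if "i < n" for i
  proof -
    consider "i = 0" | "i = m" | "1 \<le> i" "i \<noteq> m" by linarith
    then show ?thesis
    proof cases
      case 1 then show ?thesis using rel_00[OF m3 mn] by simp
    next
      case 2 then show ?thesis using rel_mm[OF m3 mn odd] by simp
    next
      case 3 then show ?thesis using rel_kk[OF m3 mn 3(1) that 3(2)] by simp
    qed
  qed
  have C: "rel_holds (Phi br m n) [i, j] [j, i]" if ij: "i < n" "j < n" "i \<noteq> j" "\<not> joined m n i j" "i \<le> j" for i j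
  proof -
    consider "i = 0" | "i \<noteq> 0" "i = m" | "i \<noteq> 0" "i \<noteq> m" "j = m" | "i \<noteq> 0" "i \<noteq> m" "j \<noteq> m" by blast
    then show ?thesis
    proof cases
      case 1
      then have "j \<noteq> m" "1 \<le> j" using ij by (auto simp: joined_def)
      then show ?thesis using rel_0k[OF m3 mn _ ij(2)] 1 by simp
    next
      case 2
      then have "j + 1 < m \<or> m + 1 < j" "1 \<le> j" using ij by (auto simp: joined_def)
      then show ?thesis using rel_mk[OF m3 mn _ ij(2)] 2 by simp
    next
      case 3
      then have "i + 1 < m \<or> m + 1 < i" "1 \<le> i" using ij by (auto simp: joined_def)
      then show ?thesis using rel_sym[OF rel_mk[OF m3 mn _ ij(1)]] 3 by simp
    next
      case 4
      then have "i + 1 < j \<or> j + 1 < i" "1 \<le> i" "1 \<le> j" using ij by (auto simp: joined_def)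
      then show ?thesis using rel_kl[OF m3 mn _ ij(1) _ _ ij(2)] 4 by simp
    qed
  qed
  show "rel_holds (Phi br m n) [i, j] [j, i]" if "i < n" "j < n" "i \<noteq> j \<and> \<not> joined m n i j" for i j
  proof (cases "i \<le> j")
    case True then show ?thesis using C that by blast
  next
    case False
    have "\<not> joined m n j i" using that by (auto simp: joined_def)
    then show ?thesis using C[of j i] that False by (auto intro: rel_sym)
  qed
  have Bk: "rel_holds (Phi br m n) [i, i+1, i] [i+1, i, i+1]" if ij: "i + 1 < n" "1 \<le> i" for i
  proof -
    consider "i + 1 = m" | "i = m" | "i + 1 \<noteq> m" "i \<noteq> m" by blast
    then show ?thesis
    proof cases
      case 1
      then have "i = m - 1" by simp
      then show ?thesis using rel_m1[OF m3 mn odd] 1 by simp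
    next
      case 2 then show ?thesis using rel_mp1[OF m3 _ odd R] ij by simp
    next
      case 3 then show ?thesis using rel_kk1[OF m3 mn ij(2) ij(1)] by simp
    qed
  qed
  show "rel_holds (Phi br m n) [i, j, i] [j, i, j]" if "i < n" "j < n" "joined m n i j" for i j
  proof -
    from that consider "i = 0" "j = m" | "i = m" "j = 0" | "1 \<le> i" "j = i + 1" | "1 \<le> j" "i = j + 1"
      unfolding joined_def by blast
    then show ?thesis
    proof cases
      case 1 then show ?thesis using rel_0m[OF m3 mn odd] by simp
    next
      case 2 then show ?thesis using rel_sym[OF rel_0m[OF m3 mn odd]] by simp
    next
      case 3 then show ?thesis using Bk[of i] that by simp
    next
      case 4 then show ?thesis using rel_sym[OF Bk[of j]] that by simp
    qed
  qed
qed

end
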